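(* Let $\ell$ be a positive integer and let $r_i=(a_i,b_i,c_i,d_i)\in\mathbb{Z}^4$, $i=1,2,3,4$, satisfy $a_ia_j+b_ib_j+c_ic_j+d_id_j=\delta_{ij}\ell$ for all $i,j\in\{1,2,3,4\}$. Let $D_i=\gcd(a_i,b_i,c_i,d_i)$ and assume $\gcd(D_1,D_2,D_3,D_4)=1$. For $1\le i<j\le 4$ let $\zeta_{ij}$ be the greatest common divisor of all $2\times2$ minors of the matrix $\begin{pmatrix} a_i & b_i & c_i & d_i\\ a_j & b_j & c_j & d_j\end{pmatrix}$. Let $H=\{\sum_{i=1}^4 s_ir_i: s_i\in[0,1]\}$ and write its Ehrhart polynomial as $E_{H}(t)=\ell^2t^4+\alpha_1t^3+\alpha_2t^2+\alpha_3t+1$. Then $$\alpha_2=\alpha_3+\delta-\Delta,$$ where $\delta=\sum_{1\le i<j\le 4}\zeta_{ij}$ and $\Delta=D_1+D_2+D_3+D_4$.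
   Context: $\delta_{ij}$ is the Kronecker delta. The Ehrhart polynomial $E_H$ is the polynomial with $E_H(t)=\#(tH\cap\mathbb{Z}^4)$ for all positive integers $t$. *)

theory Defs
  imports Complex_Main
begin

definition par_H :: "(nat \<Rightarrow> int) \<Rightarrow> (nat \<Rightarrow> int) \<Rightarrow> (nat \<Rightarrow> int) \<Rightarrow> (nat \<Rightarrow> int)
    \<Rightarrow> (real \<times> real \<times> real \<times> real) set" where
  "par_H a b c d = {(\<Sum>i=1..4. s i * a i, \<Sum>i=1..4. s i * b i,
                     \<Sum>i=1..4. s i * c i, \<Sum>i=1..4. s i * d i) | s.
                     \<forall>i\<in>{1..4::nat}. 0 \<le> s i \<and> s i \<le> (1::real)}"

definition lattice_count :: "(nat \<Rightarrow> int) \<Rightarrow> (nat \<Rightarrow> int) \<Rightarrow> (nat \<Rightarrow> int) \<Rightarrow> (nat \<Rightarrow> int)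
    \<Rightarrow> nat \<Rightarrow> nat" where
  "lattice_count a b c d t = card {(x::int, y::int, z::int, w::int).
      (real_of_int x, real_of_int y, real_of_int z, real_of_int w)
        \<in> (\<lambda>(p, q, u, v). (real t * p, real t * q, real t * u, real t * v)) ` par_H a b c d}"

definition zeta :: "(nat \<Rightarrow> int) \<Rightarrow> (nat \<Rightarrow> int) \<Rightarrow> (nat \<Rightarrow> int) \<Rightarrow> (nat \<Rightarrow> int)
    \<Rightarrow> nat \<Rightarrow> nat \<Rightarrow> int" where
  "zeta a b c d i j = Gcd {a i * b j - b i * a j, a i * c j - c i * a j, a i * d j - d i * a j,
                          b i * c j - c i * b j, b i * d j - d i * b j, c i * d j - d i * c j}"

end

theory Submission
  imports Defs "HOL-Analysis.Analysis"
begin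


lemma sum4: "(\<Sum>i=(1::nat)..4. f i) = f 1 + f 2 + f 3 + f 4"
  by (simp add: eval_nat_numeral add.assoc)

lemma sum4': "(\<Sum>i=Suc 0..4. f i) = f 1 + f 2 + f 3 + f 4"
  using sum4[of f] by simp

lemma span4:
  fixes R :: "nat \<Rightarrow> real \<times> real \<times> real \<times> real" and L :: real
  assumes L: "L > 0"
    and orth: "\<forall>i\<in>{1..4}. \<forall>j\<in>{1..4}. inner (R i) (R j) = (if i = j then L else 0)"
  shows "z = (\<Sum>k=1..4. (inner z (R k) / L) *\<^sub>R R k)"
proof (rule ccontr)
  assume ne: "z \<noteq> (\<Sum>k=1..4. (inner z (R k) / L) *\<^sub>R R k)"
  define w where "w = z - (\<Sum>k=1..4. (inner z (R k) / L) *\<^sub>R R k)"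
  have w0: "w \<noteq> 0" using ne by (simp add: w_def)
  have ow: "inner w (R j) = 0" if j: "j \<in> {1..4}" for j
  proof -
    have "inner w (R j) = inner z (R j) - (\<Sum>k=1..4. (inner z (R k) / L) * inner (R k) (R j))"
      by (simp add: w_def inner_diff_left inner_sum_left)
    also have "(\<Sum>k=1..4. (inner z (R k) / L) * inner (R k) (R j)) = (\<Sum>k=1..4. if k = j then inner z (R j) else 0)"
      using j orth L by (intro sum.cong) auto
    also have "\<dots> = inner z (R j)" using j by simp
    finally show ?thesis by simp
  qed
  have injR: "inj_on R {1..4}"
  proof (rule inj_onI)
    fix i j assume i: "i \<in> {1..4::nat}" and j: "j \<in> {1..4::nat}" and e: "R i = R j"
    show "i = j"
    proof (rule ccontr)
      assume "i \<noteq> j"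
      then have "inner (R i) (R j) = 0" using orth i j by auto
      moreover have "inner (R i) (R j) = L" using orth i j e by (metis (full_types))
      ultimately show False using L by simp
    qed
  qed
  have wnot: "w \<notin> R ` {1..4}"
  proof
    assume "w \<in> R ` {1..4}"
    then obtain j where j: "j \<in> {1..4}" and "w = R j" by auto
    then have "inner w (R j) = L" using orth by auto
    with ow[OF j] L show False by simp
  qed
  define S where "S = insert w (R ` {1..4})"
  have cS: "card S = 5"
    unfolding S_def using wnot injR by (simp add: card_image)
  have po: "pairwise orthogonal S"
    unfolding S_def pairwise_def orthogonal_def
    using ow orth by (auto simp: inner_commute)
  have z0: "0 \<notin> S"
  proof
    assume "0 \<in> S"
    then consider "w = 0" | j where "j \<in> {1..4}" "R j = 0" unfolding S_def by auto
    then show False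
    proof cases
      case 1 then show ?thesis using w0 by simp
    next
      case 2
      from orth 2(1) have "inner (R j) (R j) = L" by auto
      then show ?thesis using 2(2) L by simp
    qed
  qed
  have "card S \<le> DIM(real \<times> real \<times> real \<times> real)"
    using independent_bound[OF pairwise_orthogonal_independent[OF po z0]] by simp
  then show False using cS by simp
qed

lemma recon:
  fixes a b c d :: "nat \<Rightarrow> int" and l x y z w :: int
  assumes l_pos: "l > 0"
    and orth: "\<forall>i\<in>{1..4}. \<forall>j\<in>{1..4}.
                 a i * a j + b i * b j + c i * c j + d i * d j = (if i = j then l else 0)"
  shows "l * x = (\<Sum>k=1..4. (a k * x + b k * y + c k * z + d k * w) * a k)"
    "l * y = (\<Sum>k=1..4. (a k * x + b k * y + c k * z + d k * w) * b k)"
    "l * z = (\<Sum>k=1..4. (a k * x + b k * y + c k * z + d k * w) * c k)"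
    "l * w = (\<Sum>k=1..4. (a k * x + b k * y + c k * z + d k * w) * d k)"
proof -
  define R where "R k = (real_of_int (a k), real_of_int (b k), real_of_int (c k), real_of_int (d k))" for k
  have o: "\<forall>i\<in>{1..4}. \<forall>j\<in>{1..4}. inner (R i) (R j) = (if i = j then real_of_int l else 0)"
  proof (intro ballI)
    fix i j assume i: "i \<in> {1..4::nat}" and j: "j \<in> {1..4::nat}"
    have "inner (R i) (R j) = real_of_int (a i * a j + b i * b j + c i * c j + d i * d j)"
      by (simp add: R_def)
    also have "\<dots> = (if i = j then real_of_int l else 0)" using orth i j by simp
    finally show "inner (R i) (R j) = (if i = j then real_of_int l else 0)" .
  qed
  define Z where "Z = (real_of_int x, real_of_int y, real_of_int z, real_of_int w)"
  have e: "Z = (\<Sum>k=1..4. (inner Z (R k) / real_of_int l) *\<^sub>R R k)"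
    using span4[OF _ o] l_pos by simp
  have ip: "inner Z (R k) = real_of_int (a k * x + b k * y + c k * z + d k * w)" for k
    by (simp add: Z_def R_def algebra_simps)
  have lne: "real_of_int l \<noteq> 0" using l_pos by simp
  have e1: "real_of_int x = (\<Sum>k=1..4. real_of_int (a k * x + b k * y + c k * z + d k * w) / real_of_int l * real_of_int (a k))"
    using arg_cong[OF e, of fst] by (simp add: Z_def R_def ip fst_sum sum4 algebra_simps)
  have e2: "real_of_int y = (\<Sum>k=1..4. real_of_int (a k * x + b k * y + c k * z + d k * w) / real_of_int l * real_of_int (b k))"
    using arg_cong[OF e, of "\<lambda>p. fst (snd p)"] by (simp add: Z_def R_def ip fst_sum snd_sum sum4 algebra_simps)
  have e3: "real_of_int z = (\<Sum>k=1..4. real_of_int (a k * x + b k * y + c k * z + d k * w) / real_of_int l * real_of_int (c k))"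
    using arg_cong[OF e, of "\<lambda>p. fst (snd (snd p))"] by (simp add: Z_def R_def ip fst_sum snd_sum sum4 algebra_simps)
  have e4: "real_of_int w = (\<Sum>k=1..4. real_of_int (a k * x + b k * y + c k * z + d k * w) / real_of_int l * real_of_int (d k))"
    using arg_cong[OF e, of "\<lambda>p. snd (snd (snd p))"] by (simp add: Z_def R_def ip fst_sum snd_sum sum4 algebra_simps)
  have aux: "\<And>X s t. X = (\<Sum>k=1..4. s k / real_of_int l * t k) \<Longrightarrow> real_of_int l * X = (\<Sum>k=1..4::nat. s k * t k)"
    using lne by (simp add: sum_distrib_left)
  show "l * x = (\<Sum>k=1..4. (a k * x + b k * y + c k * z + d k * w) * a k)"
    using aux[OF e1] by (simp only: of_int_mult[symmetric] of_int_sum[symmetric] of_int_eq_iff)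
  show "l * y = (\<Sum>k=1..4. (a k * x + b k * y + c k * z + d k * w) * b k)"
    using aux[OF e2] by (simp only: of_int_mult[symmetric] of_int_sum[symmetric] of_int_eq_iff)
  show "l * z = (\<Sum>k=1..4. (a k * x + b k * y + c k * z + d k * w) * c k)"
    using aux[OF e3] by (simp only: of_int_mult[symmetric] of_int_sum[symmetric] of_int_eq_iff)
  show "l * w = (\<Sum>k=1..4. (a k * x + b k * y + c k * z + d k * w) * d k)"
    using aux[OF e4] by (simp only: of_int_mult[symmetric] of_int_sum[symmetric] of_int_eq_iff)
qed


lemma periodic_sum:
  fixes g :: "int \<Rightarrow> 'a::comm_ring_1" and m :: int and k :: nat
  assumes m: "m > 0" and per: "\<And>u. g (u + m) = g u"
  shows "(\<Sum>u\<in>{0..<int k * m}. g u) = of_nat k * (\<Sum>u\<in>{0..<m}. g u)"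
proof (induction k)
  case 0 then show ?case by simp
next
  case (Suc k)
  have perk: "g (u + int k * m) = g u" for u
  proof (induction k)
    case 0 then show ?case by simp
  next
    case (Suc k)
    have "g (u + int (Suc k) * m) = g ((u + int k * m) + m)" by (simp add: algebra_simps)
    also have "\<dots> = g u" using per Suc by simp
    finally show ?case .
  qed
  have split: "{0..<int (Suc k) * m} = {0..<int k * m} \<union> {int k * m..<int k * m + m}"
  proof -
    have h0: "0 \<le> m * int k" using m by simp
    show ?thesis using m by (auto simp: algebra_simps) (use h0 in linarith)
  qed
  have disj: "{0..<int k * m} \<inter> {int k * m..<int k * m + m} = {}" by auto
  have img: "{int k * m..<int k * m + m} = (\<lambda>u. u + int k * m) ` {0..<m}"
    by (simp add: add.commute)
  have "(\<Sum>u\<in>{int k * m..<int k * m + m}. g u) = (\<Sum>u\<in>{0..<m}. g (u + int k * m))"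
    unfolding img by (subst sum.reindex) (auto simp: inj_on_def)
  also have "\<dots> = (\<Sum>u\<in>{0..<m}. g u)" using perk by simp
  finally have h: "(\<Sum>u\<in>{int k * m..<int k * m + m}. g u) = (\<Sum>u\<in>{0..<m}. g u)" .
  show ?case
    unfolding split using Suc.IH h disj by (simp add: sum.union_disjoint algebra_simps)
qed

lemma periodic_sum_closed:
  fixes g :: "int \<Rightarrow> 'a::comm_ring_1" and m :: int and k :: nat
  assumes m: "m > 0" and per: "\<And>u. g (u + m) = g u"
  shows "(\<Sum>u\<in>{0..int k * m}. g u) = of_nat k * (\<Sum>u\<in>{0..<m}. g u) + g 0"
proof -
  have perk: "g (int k * m) = g 0"
  proof (induction k)
    case 0 then show ?case by simp
  next
    case (Suc k)
    have "g (int (Suc k) * m) = g (int k * m + m)" by (simp add: algebra_simps)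
    also have "\<dots> = g 0" using per Suc by simp
    finally show ?case .
  qed
  have "{0..int k * m} = insert (int k * m) {0..<int k * m}" using m by auto
  then show ?thesis using periodic_sum[where g=g, OF m per, of k] perk by simp
qed

lemma count_cong:
  fixes m k u0 :: int
  assumes m: "m > 0" and k: "k \<ge> 0"
  shows "(\<Sum>u\<in>{0..<m * k}. if m dvd u - u0 then 1 else 0 :: int) = k"
proof -
  have per: "(if m dvd (u + m) - u0 then 1 else 0 :: int) = (if m dvd u - u0 then 1 else 0)" for u
  proof -
    have "m dvd (u + m) - u0 \<longleftrightarrow> m dvd (u - u0) + m" by (simp add: algebra_simps)
    then show ?thesis by simp
  qed
  have one: "(\<Sum>u\<in>{0..<m}. if m dvd u - u0 then 1 else 0 :: int) = 1"
  proof -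
    have "{0..<m} \<inter> {u. m dvd u - u0} = {u0 mod m}"
    proof (intro set_eqI iffI)
      fix u assume "u \<in> {0..<m} \<inter> {u. m dvd u - u0}"
      then have u: "0 \<le> u" "u < m" "m dvd u - u0" by auto
      have "u mod m = u0 mod m" using u(3) by (simp add: mod_eq_dvd_iff)
      moreover have "u mod m = u" using u(1,2) by simp
      ultimately show "u \<in> {u0 mod m}" by simp
    next
      fix u assume "u \<in> {u0 mod m}"
      then show "u \<in> {0..<m} \<inter> {u. m dvd u - u0}" using m by (auto simp: mod_eq_dvd_iff[symmetric])
    qed
    then show ?thesis by (simp add: sum.If_cases)
  qed
  have "(\<Sum>u\<in>{0..<m * k}. if m dvd u - u0 then 1 else 0 :: int)
      = (\<Sum>u\<in>{0..<int (nat k) * m}. if m dvd u - u0 then 1 else 0 :: int)"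
    using k by (simp add: mult.commute)
  also have "\<dots> = of_nat (nat k) * (\<Sum>u\<in>{0..<m}. if m dvd u - u0 then 1 else 0 :: int)"
    by (rule periodic_sum[OF m]) (rule per)
  also have "\<dots> = of_nat (nat k)" using one by simp
  finally show ?thesis using k by simp
qed

lemma dvd_all_Gcd:
  fixes k u :: int and A :: "int set"
  shows "(\<forall>a\<in>A. k dvd u * a) \<longleftrightarrow> k dvd u * Gcd A"
proof -
  have "(\<forall>a\<in>A. k dvd u * a) \<longleftrightarrow> k dvd Gcd ((*) u ` A)" by (simp add: dvd_Gcd_iff)
  also have "\<dots> \<longleftrightarrow> k dvd u * Gcd A" by (simp add: Gcd_mult)
  finally show ?thesis .
qed

lemma bezout4:
  fixes x1 x2 x3 x4 :: int
  obtains s1 s2 s3 s4 where "s1*x1 + s2*x2 + s3*x3 + s4*x4 = Gcd {x1,x2,x3,x4}"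
proof -
  obtain p q where pq: "p * x3 + q * x4 = gcd x3 x4" using bezout_int by blast
  obtain p2 q2 where pq2: "p2 * x2 + q2 * gcd x3 x4 = gcd x2 (gcd x3 x4)" using bezout_int by blast
  obtain p1 q1 where pq1: "p1 * x1 + q1 * gcd x2 (gcd x3 x4) = gcd x1 (gcd x2 (gcd x3 x4))" using bezout_int by blast
  have "p1*x1 + (q1*p2)*x2 + (q1*q2*p)*x3 + (q1*q2*q)*x4 = Gcd {x1,x2,x3,x4}"
  proof -
    have "Gcd {x1,x2,x3,x4} = p1*x1 + q1*(p2*x2 + q2*(p*x3+q*x4))" by (simp add: pq pq1 pq2)
    then show ?thesis by (simp add: algebra_simps)
  qed
  then show ?thesis using that by blast
qed

lemma single_count:
  fixes x1 x2 x3 x4 l :: int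
  assumes l: "l > 0" and n: "x1*x1 + x2*x2 + x3*x3 + x4*x4 = l"
  shows "(\<Sum>u\<in>{0..<l}. if l dvd u*x1 \<and> l dvd u*x2 \<and> l dvd u*x3 \<and> l dvd u*x4 then 1 else 0 :: int)
         = Gcd {x1,x2,x3,x4}"
proof -
  define D where "D = Gcd {x1,x2,x3,x4}"
  have Dx: "D dvd x1" "D dvd x2" "D dvd x3" "D dvd x4" unfolding D_def by (rule Gcd_dvd; simp)+
  have "D dvd l" unfolding n[symmetric] using Dx by (intro dvd_add dvd_mult2) 
  then obtain l' where l': "l = D * l'" by (elim dvdE)
  have D0: "D \<ge> 0" unfolding D_def by simp
  have "D \<noteq> 0" using l l' by auto
  with D0 have Dp: "D > 0" by simp
  have l'p: "l' > 0" using l l' Dp by (simp add: zero_less_mult_iff)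
  have iff: "(l dvd u*x1 \<and> l dvd u*x2 \<and> l dvd u*x3 \<and> l dvd u*x4) \<longleftrightarrow> l' dvd u - 0" for u
  proof -
    have "(l dvd u*x1 \<and> l dvd u*x2 \<and> l dvd u*x3 \<and> l dvd u*x4) \<longleftrightarrow> (\<forall>a\<in>{x1,x2,x3,x4}. l dvd u * a)" by simp
    also have "\<dots> \<longleftrightarrow> l dvd u * D" unfolding D_def by (rule dvd_all_Gcd)
    also have "\<dots> \<longleftrightarrow> l' dvd u" using Dp l' by (simp add: mult.commute)
    finally show ?thesis by simp
  qed
  have "(\<Sum>u\<in>{0..<l}. if l dvd u*x1 \<and> l dvd u*x2 \<and> l dvd u*x3 \<and> l dvd u*x4 then 1 else 0 :: int)
      = (\<Sum>u\<in>{0..<l' * D}. if l' dvd u - 0 then 1 else 0 :: int)"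
    using iff l' by (simp add: mult.commute)
  also have "\<dots> = D" by (rule count_cong[OF l'p]) (use D0 in simp)
  finally show ?thesis by (simp add: D_def)
qed

lemma pair_count:
  fixes x1 x2 x3 x4 y1 y2 y3 y4 l :: int
  assumes l: "l > 0" and nx: "x1*x1 + x2*x2 + x3*x3 + x4*x4 = l"
    and ny: "y1*y1 + y2*y2 + y3*y3 + y4*y4 = l" and o: "x1*y1 + x2*y2 + x3*y3 + x4*y4 = 0"
  shows "(\<Sum>u\<in>{0..<l}. \<Sum>vv\<in>{0..<l}. if l dvd u*x1 + vv*y1 \<and> l dvd u*x2 + vv*y2 \<and> l dvd u*x3 + vv*y3
            \<and> l dvd u*x4 + vv*y4 then 1 else 0 :: int)
       = Gcd {x1*y2 - x2*y1, x1*y3 - x3*y1, x1*y4 - x4*y1, x2*y3 - x3*y2, x2*y4 - x4*y2, x3*y4 - x4*y3}"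
proof -
  define C where "C u vv \<longleftrightarrow> l dvd u*x1 + vv*y1 \<and> l dvd u*x2 + vv*y2 \<and> l dvd u*x3 + vv*y3
            \<and> l dvd u*x4 + vv*y4" for u vv
  define m12 where "m12 = x1*y2 - x2*y1"
  define m13 where "m13 = x1*y3 - x3*y1"
  define m14 where "m14 = x1*y4 - x4*y1"
  define m23 where "m23 = x2*y3 - x3*y2"
  define m24 where "m24 = x2*y4 - x4*y2"
  define m34 where "m34 = x3*y4 - x4*y3"
  define Z where "Z = Gcd {m12, m13, m14, m23, m24, m34}"
  define D where "D = Gcd {x1,x2,x3,x4}"
  have Dx: "D dvd x1" "D dvd x2" "D dvd x3" "D dvd x4" unfolding D_def by (rule Gcd_dvd; simp)+
  have "D dvd l" unfolding nx[symmetric] using Dx by (intro dvd_add dvd_mult2)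
  then obtain l' where l': "l = D * l'" by (elim dvdE)
  have D0: "D \<ge> 0" unfolding D_def by simp
  have "D \<noteq> 0" using l l' by auto
  with D0 have Dp: "D > 0" by simp
  have l'p: "l' > 0" using l l' Dp by (simp add: zero_less_mult_iff)
  have Dm: "D dvd m12" "D dvd m13" "D dvd m14" "D dvd m23" "D dvd m24" "D dvd m34"
    unfolding m12_def m13_def m14_def m23_def m24_def m34_def using Dx
    by (auto intro!: dvd_diff dvd_mult2)
  have DZ: "D dvd Z" unfolding Z_def using Dm by (intro Gcd_greatest) auto
  have Zm: "Z dvd m12" "Z dvd m13" "Z dvd m14" "Z dvd m23" "Z dvd m24" "Z dvd m34"
    unfolding Z_def by (rule Gcd_dvd; simp)+
  have lag: "l * l = m12*m12 + m13*m13 + m14*m14 + m23*m23 + m24*m24 + m34*m34"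
  proof -
    have "(x1*x1 + x2*x2 + x3*x3 + x4*x4) * (y1*y1 + y2*y2 + y3*y3 + y4*y4)
         - (x1*y1 + x2*y2 + x3*y3 + x4*y4) * (x1*y1 + x2*y2 + x3*y3 + x4*y4)
         = m12*m12 + m13*m13 + m14*m14 + m23*m23 + m24*m24 + m34*m34"
      unfolding m12_def m13_def m14_def m23_def m24_def m34_def by algebra
    then show ?thesis using nx ny o by simp
  qed
  have "Z * Z dvd l * l" unfolding lag using Zm
    by (auto intro!: dvd_add mult_dvd_mono)
  then have Zl: "Z dvd l" using pow_divides_pow_iff[of 2 Z l] by (simp add: power2_eq_square)
  have Z0: "Z \<ge> 0" unfolding Z_def by simp
  have "Z \<noteq> 0"
  proof
    assume "Z = 0"
    then have "m12 = 0" "m13 = 0" "m14 = 0" "m23 = 0" "m24 = 0" "m34 = 0" using Zm by auto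
    then have "l * l = 0" using lag by simp
    then show False using l by simp
  qed
  with Z0 have Zp: "Z > 0" by simp
  obtain e where e: "Z = D * e" using DZ by (elim dvdE)
  have ep: "e > 0" using Zp Dp e by (simp add: zero_less_mult_iff)
  have "e dvd l" using Zl e by (metis dvd_mult_right)
  then obtain l2 where l2: "l = e * l2" by (elim dvdE)
  have l2p: "l2 > 0" using l l2 ep by (simp add: zero_less_mult_iff)
  have hD: "l * D dvd p * q" if "D dvd p" "l dvd q" for p q
    using mult_dvd_mono[OF that(2) that(1)] by (simp add: mult.commute)
  have key: "(\<exists>u. C u vv) \<longleftrightarrow> l dvd vv * e" for vv
  proof
    assume "\<exists>u. C u vv"
    then obtain u where Cu: "C u vv" by blast
    have c: "l dvd u*x1 + vv*y1" "l dvd u*x2 + vv*y2" "l dvd u*x3 + vv*y3" "l dvd u*x4 + vv*y4"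
      using Cu by (auto simp: C_def)
    have i12: "vv*m12 = x1*(u*x2 + vv*y2) - x2*(u*x1 + vv*y1)" unfolding m12_def by algebra
    have i13: "vv*m13 = x1*(u*x3 + vv*y3) - x3*(u*x1 + vv*y1)" unfolding m13_def by algebra
    have i14: "vv*m14 = x1*(u*x4 + vv*y4) - x4*(u*x1 + vv*y1)" unfolding m14_def by algebra
    have i23: "vv*m23 = x2*(u*x3 + vv*y3) - x3*(u*x2 + vv*y2)" unfolding m23_def by algebra
    have i24: "vv*m24 = x2*(u*x4 + vv*y4) - x4*(u*x2 + vv*y2)" unfolding m24_def by algebra
    have i34: "vv*m34 = x3*(u*x4 + vv*y4) - x4*(u*x3 + vv*y3)" unfolding m34_def by algebra
    have "l*D dvd vv*m12" unfolding i12 using c Dx by (intro dvd_diff hD) auto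
    moreover have "l*D dvd vv*m13" unfolding i13 using c Dx by (intro dvd_diff hD) auto
    moreover have "l*D dvd vv*m14" unfolding i14 using c Dx by (intro dvd_diff hD) auto
    moreover have "l*D dvd vv*m23" unfolding i23 using c Dx by (intro dvd_diff hD) auto
    moreover have "l*D dvd vv*m24" unfolding i24 using c Dx by (intro dvd_diff hD) auto
    moreover have "l*D dvd vv*m34" unfolding i34 using c Dx by (intro dvd_diff hD) auto
    ultimately have "\<forall>m\<in>{m12, m13, m14, m23, m24, m34}. l * D dvd vv * m" by simp
    then have "l * D dvd vv * Z" unfolding Z_def by (simp only: dvd_all_Gcd)
    then have "l * D dvd (vv * e) * D" by (simp add: e algebra_simps)
    then show "l dvd vv * e" using Dp by simp
  next
    assume h: "l dvd vv * e"
    then have "l * D dvd (vv * e) * D" by (simp add: Dp)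
    then have "l * D dvd vv * Z" by (simp add: e algebra_simps)
    then have "\<forall>m\<in>{m12, m13, m14, m23, m24, m34}. l * D dvd vv * m"
      unfolding Z_def by (simp only: dvd_all_Gcd)
    then have vm: "l*D dvd vv*m12" "l*D dvd vv*m13" "l*D dvd vv*m14" "l*D dvd vv*m23"
       "l*D dvd vv*m24" "l*D dvd vv*m34" by auto
    obtain s1 s2 s3 s4 where bez: "s1*x1 + s2*x2 + s3*x3 + s4*x4 = D"
      using bezout4[of x1 x2 x3 x4] unfolding D_def by blast
    define X where "X = vv*(s1*y1 + s2*y2 + s3*y3 + s4*y4)"
    have q1: "D* vv*y1 - X*x1 = -(s2*(vv*m12)) - s3*(vv*m13) - s4*(vv*m14)"
      unfolding bez[symmetric] X_def m12_def m13_def m14_def by algebra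
    have q2: "D* vv*y2 - X*x2 = s1*(vv*m12) - s3*(vv*m23) - s4*(vv*m24)"
      unfolding bez[symmetric] X_def m12_def m23_def m24_def by algebra
    have q3: "D* vv*y3 - X*x3 = s1*(vv*m13) + s2*(vv*m23) - s4*(vv*m34)"
      unfolding bez[symmetric] X_def m13_def m23_def m34_def by algebra
    have q4: "D* vv*y4 - X*x4 = s1*(vv*m14) + s2*(vv*m24) + s3*(vv*m34)"
      unfolding bez[symmetric] X_def m14_def m24_def m34_def by algebra
    have d1: "l*D dvd D* vv*y1 - X*x1" unfolding q1 using vm by (simp add: dvd_diff dvd_mult)
    have d2: "l*D dvd D* vv*y2 - X*x2" unfolding q2 using vm by (simp add: dvd_diff dvd_mult)
    have d3: "l*D dvd D* vv*y3 - X*x3" unfolding q3 using vm by (simp add: dvd_diff dvd_add dvd_mult)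
    have d4: "l*D dvd D* vv*y4 - X*x4" unfolding q4 using vm by (simp add: dvd_add dvd_mult)
    have sumid: "x1*(D* vv*y1 - X*x1) + x2*(D* vv*y2 - X*x2) + x3*(D* vv*y3 - X*x3) + x4*(D* vv*y4 - X*x4)
          = D* vv*(x1*y1 + x2*y2 + x3*y3 + x4*y4) - X*(x1*x1 + x2*x2 + x3*x3 + x4*x4)" by algebra
    have "l*D dvd x1*(D* vv*y1 - X*x1) + x2*(D* vv*y2 - X*x2) + x3*(D* vv*y3 - X*x3) + x4*(D* vv*y4 - X*x4)"
      using d1 d2 d3 d4 by (intro dvd_add dvd_mult)
    then have "l*D dvd -(X*l)" unfolding sumid o nx by simp
    then have "D * l dvd X * l" by (simp add: mult.commute)
    then have "D dvd X" using l by simp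
    then obtain u' where u': "X = D * u'" by (elim dvdE)
    have fin: "l dvd (-u')*x + vv*y" if "l*D dvd D* vv*y - X*x" for x y
    proof -
      have "l*D dvd (vv*y - u'*x) * D" using that unfolding u' by (simp add: algebra_simps)
      then have "l dvd vv*y - u'*x" using Dp by simp
      then show ?thesis by (simp add: algebra_simps)
    qed
    have "C (-u') vv" unfolding C_def using fin[OF d1] fin[OF d2] fin[OF d3] fin[OF d4] by simp
    then show "\<exists>u. C u vv" by blast
  qed
  have inner: "(\<Sum>u\<in>{0..<l}. if C u vv then 1 else 0 :: int) = (if l dvd vv * e then D else 0)" for vv
  proof (cases "l dvd vv * e")
    case True
    then obtain u0 where C0: "C u0 vv" using key by blast
    have iff: "C u vv \<longleftrightarrow> l' dvd u - u0" for u
    proof -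
      have c0: "l dvd u0*x1 + vv*y1" "l dvd u0*x2 + vv*y2" "l dvd u0*x3 + vv*y3" "l dvd u0*x4 + vv*y4"
        using C0 by (auto simp: C_def)
      have sh: "l dvd u*x + vv*y \<longleftrightarrow> l dvd (u - u0)*x" if "l dvd u0*x + vv*y" for x y
      proof -
        have "u*x + vv*y = (u - u0)*x + (u0*x + vv*y)" by algebra
        then have "l dvd u*x + vv*y \<longleftrightarrow> l dvd (u - u0)*x + (u0*x + vv*y)" by (simp only:)
        also have "\<dots> \<longleftrightarrow> l dvd (u - u0)*x" using that by (rule dvd_add_left_iff)
        finally show ?thesis .
      qed
      have "C u vv \<longleftrightarrow> (\<forall>a\<in>{x1,x2,x3,x4}. l dvd (u - u0) * a)"
        unfolding C_def using sh[OF c0(1)] sh[OF c0(2)] sh[OF c0(3)] sh[OF c0(4)] by simp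
      also have "\<dots> \<longleftrightarrow> l dvd (u - u0) * D" unfolding D_def by (rule dvd_all_Gcd)
      also have "\<dots> \<longleftrightarrow> l' dvd u - u0" using Dp l' by (simp add: mult.commute)
      finally show ?thesis .
    qed
    have "(\<Sum>u\<in>{0..<l}. if C u vv then 1 else 0 :: int) = (\<Sum>u\<in>{0..<l' * D}. if l' dvd u - u0 then 1 else 0 :: int)"
      using iff l' by (simp add: mult.commute)
    also have "\<dots> = D" by (rule count_cong[OF l'p]) (use D0 in simp)
    finally show ?thesis using True by simp
  next
    case False
    then have "\<not> C u vv" for u using key by blast
    then show ?thesis using False by simp
  qed
  have "(\<Sum>u\<in>{0..<l}. \<Sum>vv\<in>{0..<l}. if C u vv then 1 else 0 :: int)
      = (\<Sum>vv\<in>{0..<l}. \<Sum>u\<in>{0..<l}. if C u vv then 1 else 0 :: int)" by (rule sum.swap)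
  also have "\<dots> = (\<Sum>vv\<in>{0..<l}. D * (if l2 dvd vv - 0 then 1 else 0))"
  proof (rule sum.cong[OF refl])
    fix vv
    have "l dvd vv * e \<longleftrightarrow> l2 dvd vv" using l2 ep by (simp add: mult.commute)
    then show "(\<Sum>u\<in>{0..<l}. if C u vv then 1 else 0 :: int) = D * (if l2 dvd vv - 0 then 1 else 0)"
      using inner by simp
  qed
  also have "\<dots> = D * (\<Sum>vv\<in>{0..<l2 * e}. if l2 dvd vv - 0 then 1 else 0)"
    by (simp add: sum_distrib_left l2 mult.commute)
  also have "\<dots> = D * e" by (subst count_cong[OF l2p]) (use ep in auto)
  finally show ?thesis unfolding C_def using e by (simp add: Z_def m12_def m13_def m14_def m23_def m24_def m34_def)
qed


lemma expand4:
  fixes G :: "int \<Rightarrow> int \<Rightarrow> int \<Rightarrow> int \<Rightarrow> int" and l :: int and t :: nat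
  assumes l: "l > 0"
    and p1: "\<And>a b c d. G (a+l) b c d = G a b c d"
    and p2: "\<And>a b c d. G a (b+l) c d = G a b c d"
    and p3: "\<And>a b c d. G a b (c+l) d = G a b c d"
    and p4: "\<And>a b c d. G a b c (d+l) = G a b c d"
  shows "(\<Sum>y1\<in>{0..int t*l}. \<Sum>y2\<in>{0..int t*l}. \<Sum>y3\<in>{0..int t*l}. \<Sum>y4\<in>{0..int t*l}. G y1 y2 y3 y4)
    = int t^4 * (\<Sum>y1\<in>{0..<l}. \<Sum>y2\<in>{0..<l}. \<Sum>y3\<in>{0..<l}. \<Sum>y4\<in>{0..<l}. G y1 y2 y3 y4)
    + int t^3 * ((\<Sum>y1\<in>{0..<l}. \<Sum>y2\<in>{0..<l}. \<Sum>y3\<in>{0..<l}. G y1 y2 y3 0)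
               + (\<Sum>y1\<in>{0..<l}. \<Sum>y2\<in>{0..<l}. \<Sum>y4\<in>{0..<l}. G y1 y2 0 y4)
               + (\<Sum>y1\<in>{0..<l}. \<Sum>y3\<in>{0..<l}. \<Sum>y4\<in>{0..<l}. G y1 0 y3 y4)
               + (\<Sum>y2\<in>{0..<l}. \<Sum>y3\<in>{0..<l}. \<Sum>y4\<in>{0..<l}. G 0 y2 y3 y4))
    + int t^2 * ((\<Sum>y1\<in>{0..<l}. \<Sum>y2\<in>{0..<l}. G y1 y2 0 0)
               + (\<Sum>y1\<in>{0..<l}. \<Sum>y3\<in>{0..<l}. G y1 0 y3 0)
               + (\<Sum>y1\<in>{0..<l}. \<Sum>y4\<in>{0..<l}. G y1 0 0 y4)
               + (\<Sum>y2\<in>{0..<l}. \<Sum>y3\<in>{0..<l}. G 0 y2 y3 0)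
               + (\<Sum>y2\<in>{0..<l}. \<Sum>y4\<in>{0..<l}. G 0 y2 0 y4)
               + (\<Sum>y3\<in>{0..<l}. \<Sum>y4\<in>{0..<l}. G 0 0 y3 y4))
    + int t * ((\<Sum>y1\<in>{0..<l}. G y1 0 0 0) + (\<Sum>y2\<in>{0..<l}. G 0 y2 0 0)
               + (\<Sum>y3\<in>{0..<l}. G 0 0 y3 0) + (\<Sum>y4\<in>{0..<l}. G 0 0 0 y4))
    + G 0 0 0 0"
proof -
  note psc = periodic_sum_closed[OF l]
  have r: "(\<Sum>u\<in>{0..int t * l}. g u) = int t * (\<Sum>u\<in>{0..<l}. g u) + g 0" if "\<And>u. g (u + l) = g u" for g :: "int \<Rightarrow> int"
    using psc[of g t] that by simp
  have r': "(\<Sum>u\<in>{0..l * int t}. g u) = int t * (\<Sum>u\<in>{0..<l}. g u) + g 0" if "\<And>u. g (u + l) = g u" for g :: "int \<Rightarrow> int"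
    using r[of g] that by (simp add: mult.commute)
  show ?thesis
    by (simp add: r r' p1 p2 p3 p4 sum.distrib sum_distrib_left[symmetric] algebra_simps power_def)
qed

lemma mem_scaled:
  "(X \<in> (\<lambda>(p, q, u, v). (real t * p, real t * q, real t * u, real t * v)) ` par_H a b c d) \<longleftrightarrow>
   (\<exists>s. (\<forall>i\<in>{1..4::nat}. 0 \<le> s i \<and> s i \<le> (1::real)) \<and>
      X = (real t * (\<Sum>i=1..4. s i * a i), real t * (\<Sum>i=1..4. s i * b i),
           real t * (\<Sum>i=1..4. s i * c i), real t * (\<Sum>i=1..4. s i * d i)))"
proof
  assume "X \<in> (\<lambda>(p, q, u, v). (real t * p, real t * q, real t * u, real t * v)) ` par_H a b c d"
  then show "\<exists>s. (\<forall>i\<in>{1..4::nat}. 0 \<le> s i \<and> s i \<le> (1::real)) \<and>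
      X = (real t * (\<Sum>i=1..4. s i * a i), real t * (\<Sum>i=1..4. s i * b i),
           real t * (\<Sum>i=1..4. s i * c i), real t * (\<Sum>i=1..4. s i * d i))"
    unfolding par_H_def by auto
next
  assume "\<exists>s. (\<forall>i\<in>{1..4::nat}. 0 \<le> s i \<and> s i \<le> (1::real)) \<and>
      X = (real t * (\<Sum>i=1..4. s i * a i), real t * (\<Sum>i=1..4. s i * b i),
           real t * (\<Sum>i=1..4. s i * c i), real t * (\<Sum>i=1..4. s i * d i))"
  then obtain s where s: "\<forall>i\<in>{1..4::nat}. 0 \<le> s i \<and> s i \<le> (1::real)"
    and X: "X = (real t * (\<Sum>i=1..4. s i * a i), real t * (\<Sum>i=1..4. s i * b i),
           real t * (\<Sum>i=1..4. s i * c i), real t * (\<Sum>i=1..4. s i * d i))" by blast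
  have m: "((\<Sum>i=1..4. s i * a i), (\<Sum>i=1..4. s i * b i), (\<Sum>i=1..4. s i * c i), (\<Sum>i=1..4. s i * d i))
      \<in> par_H a b c d" unfolding par_H_def using s by blast
  show "X \<in> (\<lambda>(p, q, u, v). (real t * p, real t * q, real t * u, real t * v)) ` par_H a b c d"
    by (rule image_eqI[OF _ m]) (simp add: X)
qed



definition Fc :: "(nat \<Rightarrow> int) \<Rightarrow> (nat \<Rightarrow> int) \<Rightarrow> (nat \<Rightarrow> int) \<Rightarrow> (nat \<Rightarrow> int) \<Rightarrow> int
   \<Rightarrow> int \<Rightarrow> int \<Rightarrow> int \<Rightarrow> int \<Rightarrow> bool" where
  "Fc a b c d l y1 y2 y3 y4 \<longleftrightarrow> l dvd y1*a 1 + y2*a 2 + y3*a 3 + y4*a 4 \<and> l dvd y1*b 1 + y2*b 2 + y3*b 3 + y4*b 4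
     \<and> l dvd y1*c 1 + y2*c 2 + y3*c 3 + y4*c 4 \<and> l dvd y1*d 1 + y2*d 2 + y3*d 3 + y4*d 4"

lemma lc_eq:
  fixes a b c d :: "nat \<Rightarrow> int" and l :: int and t :: nat
  assumes l_pos: "l > 0"
    and orth: "\<forall>i\<in>{1..4}. \<forall>j\<in>{1..4}.
                 a i * a j + b i * b j + c i * c j + d i * d j = (if i = j then l else 0)"
    and t: "t > 0"
  shows "lattice_count a b c d t = card {(y1,y2,y3,y4). y1 \<in> {0..int t*l} \<and> y2 \<in> {0..int t*l}
             \<and> y3 \<in> {0..int t*l} \<and> y4 \<in> {0..int t*l} \<and> Fc a b c d l y1 y2 y3 y4}"
proof -
  define P where "P x y z w k = a k*x + b k*y + c k*z + d k*w" for x y z w :: int and k :: nat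
  define S where "S = {(x,y,z,w). \<forall>k\<in>{1..4::nat}. 0 \<le> P x y z w k \<and> P x y z w k \<le> int t * l}"
  have tr: "real t > 0" using t by simp
  have lr: "real_of_int l > 0" using l_pos by simp
  have O: "a i*a j + b i*b j + c i*c j + d i*d j = (if i=j then l else 0)"
    if "i \<in> {1..4}" "j \<in> {1..4}" for i j using orth that by blast
  have mem: "(real_of_int x, real_of_int y, real_of_int z, real_of_int w)
      \<in> (\<lambda>(p, q, u, v). (real t * p, real t * q, real t * u, real t * v)) ` par_H a b c d
      \<longleftrightarrow> (\<forall>k\<in>{1..4}. 0 \<le> P x y z w k \<and> P x y z w k \<le> int t * l)" for x y z w
  proof
    assume "(real_of_int x, real_of_int y, real_of_int z, real_of_int w)
      \<in> (\<lambda>(p, q, u, v). (real t * p, real t * q, real t * u, real t * v)) ` par_H a b c d"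
    then obtain s where s: "\<forall>i\<in>{1..4::nat}. 0 \<le> s i \<and> s i \<le> (1::real)"
      and ex: "real_of_int x = real t * (\<Sum>i=1..4. s i * a i)"
      and ey: "real_of_int y = real t * (\<Sum>i=1..4. s i * b i)"
      and ez: "real_of_int z = real t * (\<Sum>i=1..4. s i * c i)"
      and ew: "real_of_int w = real t * (\<Sum>i=1..4. s i * d i)"
      unfolding mem_scaled by auto
    show "\<forall>k\<in>{1..4}. 0 \<le> P x y z w k \<and> P x y z w k \<le> int t * l"
    proof
      fix k :: nat assume k: "k \<in> {1..4}"
      have "real_of_int (P x y z w k) = real t * (\<Sum>i=1..4. s i * real_of_int (a k * a i + b k * b i + c k * c i + d k * d i))"
        by (simp add: P_def ex ey ez ew sum4 sum4' algebra_simps)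
      also have "(\<Sum>i=1..4. s i * real_of_int (a k * a i + b k * b i + c k * c i + d k * d i))
          = (\<Sum>i=1..4. if i = k then s i * real_of_int l else 0)"
        by (rule sum.cong[OF refl]) (use O k in auto)
      also have "\<dots> = s k * real_of_int l" using k by simp
      finally have e: "real_of_int (P x y z w k) = real t * s k * real_of_int l" by simp
      have "0 \<le> real t * s k * real_of_int l" using s k tr lr by simp
      then have g0: "0 \<le> P x y z w k" using e by linarith
      have "real t * s k * real_of_int l \<le> real t * 1 * real_of_int l"
        using s k tr lr by (intro mult_right_mono mult_left_mono) auto
      then have "real_of_int (P x y z w k) \<le> real_of_int (int t * l)" using e by simp
      then have "P x y z w k \<le> int t * l" by linarith
      with g0 show "0 \<le> P x y z w k \<and> P x y z w k \<le> int t * l" by simp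
    qed
  next
    assume B: "\<forall>k\<in>{1..4}. 0 \<le> P x y z w k \<and> P x y z w k \<le> int t * l"
    define s where "s i = real_of_int (P x y z w i) / (real t * real_of_int l)" for i
    have sb: "\<forall>i\<in>{1..4::nat}. 0 \<le> s i \<and> s i \<le> (1::real)"
    proof
      fix i :: nat assume i: "i \<in> {1..4}"
      have "0 \<le> real_of_int (P x y z w i)" using B i by simp
      moreover have "real_of_int (P x y z w i) \<le> real t * real_of_int l"
        using B i by (metis of_int_le_iff of_int_mult of_int_of_nat_eq)
      ultimately show "0 \<le> s i \<and> s i \<le> 1" unfolding s_def using tr lr by (simp add: divide_le_eq_1)
    qed
    have gen: "real t * (\<Sum>i=1..4. s i * real_of_int (f i)) = real_of_int (\<Sum>i=1..4. P x y z w i * f i) / real_of_int l" for f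
      unfolding s_def using tr lr by (simp add: sum4 sum4' field_simps)
    have rc: "l * x = (\<Sum>k=1..4. P x y z w k * a k)" "l * y = (\<Sum>k=1..4. P x y z w k * b k)"
      "l * z = (\<Sum>k=1..4. P x y z w k * c k)" "l * w = (\<Sum>k=1..4. P x y z w k * d k)"
      unfolding P_def using recon[OF l_pos orth] by blast+
    have cx: "real_of_int v = real_of_int (l * v) / real_of_int l" for v using lr by simp
    show "(real_of_int x, real_of_int y, real_of_int z, real_of_int w)
      \<in> (\<lambda>(p, q, u, v). (real t * p, real t * q, real t * u, real t * v)) ` par_H a b c d"
      unfolding mem_scaled
      apply (rule exI[of _ s])
      using sb gen[of a] gen[of b] gen[of c] gen[of d] rc cx[of x] cx[of y] cx[of z] cx[of w] by simp
  qed
  have eq1: "{(x::int, y::int, z::int, w::int). (real_of_int x, real_of_int y, real_of_int z, real_of_int w)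
        \<in> (\<lambda>(p, q, u, v). (real t * p, real t * q, real t * u, real t * v)) ` par_H a b c d} = S"
    unfolding S_def using mem by auto
  define B where "B = {(y1,y2,y3,y4). y1 \<in> {0..int t*l} \<and> y2 \<in> {0..int t*l}
             \<and> y3 \<in> {0..int t*l} \<and> y4 \<in> {0..int t*l} \<and> Fc a b c d l y1 y2 y3 y4}"
  define \<phi> where "\<phi> = (\<lambda>(x,y,z,w). (P x y z w 1, P x y z w 2, P x y z w 3, P x y z w 4))"
  have rcg: "l * x = P x y z w 1 * a 1 + P x y z w 2 * a 2 + P x y z w 3 * a 3 + P x y z w 4 * a 4"
     "l * y = P x y z w 1 * b 1 + P x y z w 2 * b 2 + P x y z w 3 * b 3 + P x y z w 4 * b 4"
     "l * z = P x y z w 1 * c 1 + P x y z w 2 * c 2 + P x y z w 3 * c 3 + P x y z w 4 * c 4"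
     "l * w = P x y z w 1 * d 1 + P x y z w 2 * d 2 + P x y z w 3 * d 3 + P x y z w 4 * d 4" for x y z w
    unfolding P_def using recon[OF l_pos orth, where x=x and y=y and z=z and w=w] by (simp_all add: sum4 sum4')
  have inj: "inj_on \<phi> S"
  proof (rule inj_onI)
    fix p q assume "p \<in> S" "q \<in> S" and e: "\<phi> p = \<phi> q"
    obtain x y z w where p: "p = (x,y,z,w)" by (cases p) auto
    obtain x' y' z' w' where q: "q = (x',y',z',w')" by (cases q) auto
    have e1: "P x y z w 1 = P x' y' z' w' 1" and e2: "P x y z w 2 = P x' y' z' w' 2"
      and e3: "P x y z w 3 = P x' y' z' w' 3" and e4: "P x y z w 4 = P x' y' z' w' 4"
      using e unfolding p q \<phi>_def by auto
    note r1 = rcg[where x=x and y=y and z=z and w=w]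
    note r2 = rcg[where x=x' and y=y' and z=z' and w=w']
    have "l * x = l * x'" "l * y = l * y'" "l * z = l * z'" "l * w = l * w'"
      by (simp only: r1 r2 e1 e2 e3 e4)+
    then show "p = q" using l_pos unfolding p q by simp
  qed
  have img: "\<phi> ` S = B"
  proof (intro set_eqI iffI)
    fix q assume "q \<in> \<phi> ` S"
    then obtain x y z w where xs: "(x,y,z,w) \<in> S" and q: "q = \<phi> (x,y,z,w)" by auto
    have bnd: "0 \<le> P x y z w k \<and> P x y z w k \<le> int t * l" if "k \<in> {1..4}" for k
      using xs that unfolding S_def by auto
    have "Fc a b c d l (P x y z w 1) (P x y z w 2) (P x y z w 3) (P x y z w 4)"
      unfolding Fc_def by (simp only: rcg[where x=x and y=y and z=z and w=w, symmetric] dvd_triv_left simp_thms)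
    then show "q \<in> B" unfolding q B_def \<phi>_def using bnd[of 1] bnd[of 2] bnd[of 3] bnd[of 4] by simp
  next
    fix q assume "q \<in> B"
    then obtain y1 y2 y3 y4 where q: "q = (y1,y2,y3,y4)" and yb: "y1 \<in> {0..int t*l}" "y2 \<in> {0..int t*l}"
       "y3 \<in> {0..int t*l}" "y4 \<in> {0..int t*l}" and F: "Fc a b c d l y1 y2 y3 y4"
      unfolding B_def by auto
    obtain x where hx: "y1*a 1 + y2*a 2 + y3*a 3 + y4*a 4 = l * x" using F unfolding Fc_def by (auto elim!: dvdE)
    obtain y where hy: "y1*b 1 + y2*b 2 + y3*b 3 + y4*b 4 = l * y" using F unfolding Fc_def by (auto elim!: dvdE)
    obtain z where hz: "y1*c 1 + y2*c 2 + y3*c 3 + y4*c 4 = l * z" using F unfolding Fc_def by (auto elim!: dvdE)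
    obtain w where hw: "y1*d 1 + y2*d 2 + y3*d 3 + y4*d 4 = l * w" using F unfolding Fc_def by (auto elim!: dvdE)
    have Pj: "l * P x y z w j = y1 * (a j*a 1 + b j*b 1 + c j*c 1 + d j*d 1) + y2 * (a j*a 2 + b j*b 2 + c j*c 2 + d j*d 2)
       + y3 * (a j*a 3 + b j*b 3 + c j*c 3 + d j*d 3) + y4 * (a j*a 4 + b j*b 4 + c j*c 4 + d j*d 4)" for j
    proof -
      have "l * P x y z w j = a j*(l*x) + b j*(l*y) + c j*(l*z) + d j*(l*w)" by (simp add: P_def algebra_simps)
      also have "\<dots> = a j*(y1*a 1 + y2*a 2 + y3*a 3 + y4*a 4) + b j*(y1*b 1 + y2*b 2 + y3*b 3 + y4*b 4)
          + c j*(y1*c 1 + y2*c 2 + y3*c 3 + y4*c 4) + d j*(y1*d 1 + y2*d 2 + y3*d 3 + y4*d 4)"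
        by (simp only: hx hy hz hw)
      finally show ?thesis by (simp add: algebra_simps)
    qed
    have Pv: "P x y z w 1 = y1" "P x y z w 2 = y2" "P x y z w 3 = y3" "P x y z w 4 = y4"
      using Pj[of 1] Pj[of 2] Pj[of 3] Pj[of 4] O l_pos by simp_all
    have "(x,y,z,w) \<in> S" unfolding S_def using Pv yb by (auto simp: numeral_eq_Suc le_Suc_eq)
    moreover have "q = \<phi> (x,y,z,w)" unfolding q \<phi>_def using Pv by simp
    ultimately show "q \<in> \<phi> ` S" by blast
  qed
  have "lattice_count a b c d t = card S" unfolding lattice_count_def eq1 ..
  also have "\<dots> = card (\<phi> ` S)" using inj by (simp add: card_image)
  also have "\<dots> = card B" using img by simp
  finally show ?thesis unfolding B_def .
qed


lemma sum_pairs: "(\<Sum>i=(1::nat)..4. \<Sum>j=i+1..4. f i j) = f 1 2 + f 1 3 + f 1 4 + f 2 3 + f 2 4 + f 3 4"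
  by (simp add: eval_nat_numeral ac_simps)
lemma poly5:
  fixes c0 c1 c2 c3 c4 :: real
  assumes "\<And>t::nat. t \<in> {1,2,3,4,5} \<Longrightarrow> c4*real t^4 + c3*real t^3 + c2*real t^2 + c1*real t + c0 = 0"
  shows "c1 = 0" "c2 = 0"
proof -
  have "c4*real t^4 + c3*real t^3 + c2*real t^2 + c1*real t + c0 = 0" if "t \<in> {1,2,3,4,5}" for t using assms that by blast
  from this[of 1] this[of 2] this[of 3] this[of 4] this[of 5]
  have "c4 + c3 + c2 + c1 + c0 = 0" "16*c4 + 8*c3 + 4*c2 + 2*c1 + c0 = 0"
    "81*c4 + 27*c3 + 9*c2 + 3*c1 + c0 = 0" "256*c4 + 64*c3 + 16*c2 + 4*c1 + c0 = 0"
    "625*c4 + 125*c3 + 25*c2 + 5*c1 + c0 = 0" by simp_all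
  then show "c1 = 0" "c2 = 0" by linarith+
qed
lemma dvd_shift:
  fixes l y1 y2 y3 y4 p1 p2 p3 p4 :: int
  shows "l dvd (y1+l)*p1 + y2*p2 + y3*p3 + y4*p4 \<longleftrightarrow> l dvd y1*p1 + y2*p2 + y3*p3 + y4*p4"
    "l dvd y1*p1 + (y2+l)*p2 + y3*p3 + y4*p4 \<longleftrightarrow> l dvd y1*p1 + y2*p2 + y3*p3 + y4*p4"
    "l dvd y1*p1 + y2*p2 + (y3+l)*p3 + y4*p4 \<longleftrightarrow> l dvd y1*p1 + y2*p2 + y3*p3 + y4*p4"
    "l dvd y1*p1 + y2*p2 + y3*p3 + (y4+l)*p4 \<longleftrightarrow> l dvd y1*p1 + y2*p2 + y3*p3 + y4*p4"
proof -
  have E1: "(y1+l)*p1 + y2*p2 + y3*p3 + y4*p4 = (y1*p1 + y2*p2 + y3*p3 + y4*p4) + p1*l" by (simp add: algebra_simps)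
  show "l dvd (y1+l)*p1 + y2*p2 + y3*p3 + y4*p4 \<longleftrightarrow> l dvd y1*p1 + y2*p2 + y3*p3 + y4*p4" by (simp only: E1 dvd_add_times_triv_right_iff)
  have E2: "y1*p1 + (y2+l)*p2 + y3*p3 + y4*p4 = (y1*p1 + y2*p2 + y3*p3 + y4*p4) + p2*l" by (simp add: algebra_simps)
  show "l dvd y1*p1 + (y2+l)*p2 + y3*p3 + y4*p4 \<longleftrightarrow> l dvd y1*p1 + y2*p2 + y3*p3 + y4*p4" by (simp only: E2 dvd_add_times_triv_right_iff)
  have E3: "y1*p1 + y2*p2 + (y3+l)*p3 + y4*p4 = (y1*p1 + y2*p2 + y3*p3 + y4*p4) + p3*l" by (simp add: algebra_simps)
  show "l dvd y1*p1 + y2*p2 + (y3+l)*p3 + y4*p4 \<longleftrightarrow> l dvd y1*p1 + y2*p2 + y3*p3 + y4*p4" by (simp only: E3 dvd_add_times_triv_right_iff)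
  have E4: "y1*p1 + y2*p2 + y3*p3 + (y4+l)*p4 = (y1*p1 + y2*p2 + y3*p3 + y4*p4) + p4*l" by (simp add: algebra_simps)
  show "l dvd y1*p1 + y2*p2 + y3*p3 + (y4+l)*p4 \<longleftrightarrow> l dvd y1*p1 + y2*p2 + y3*p3 + y4*p4" by (simp only: E4 dvd_add_times_triv_right_iff)
qed

lemma Fc_per:
  "Fc a b c d l (y1+l) y2 y3 y4 = Fc a b c d l y1 y2 y3 y4"
  "Fc a b c d l y1 (y2+l) y3 y4 = Fc a b c d l y1 y2 y3 y4"
  "Fc a b c d l y1 y2 (y3+l) y4 = Fc a b c d l y1 y2 y3 y4"
  "Fc a b c d l y1 y2 y3 (y4+l) = Fc a b c d l y1 y2 y3 y4"
  unfolding Fc_def by (simp_all only: dvd_shift)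



theorem theorem2p17:
  fixes a b c d :: "nat \<Rightarrow> int" and l :: int and \<alpha>1 \<alpha>2 \<alpha>3 :: real
  assumes l_pos: "l > 0"
    and orth: "\<forall>i\<in>{1..4}. \<forall>j\<in>{1..4}.
                 a i * a j + b i * b j + c i * c j + d i * d j = (if i = j then l else 0)"
    and coprime: "Gcd ((\<lambda>i. Gcd {a i, b i, c i, d i}) ` {1..4}) = 1"
    and ehrhart: "\<forall>t::nat. t > 0 \<longrightarrow>
        real (lattice_count a b c d t)
          = real_of_int (l^2) * real t ^ 4 + \<alpha>1 * real t ^ 3 + \<alpha>2 * real t ^ 2 + \<alpha>3 * real t + 1"
  shows "\<alpha>2 = \<alpha>3 + real_of_int (\<Sum>i=1..4. \<Sum>j=i+1..4. zeta a b c d i j)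
                   - real_of_int (\<Sum>i=1..4. Gcd {a i, b i, c i, d i})"
proof -
  define G where "G y1 y2 y3 y4 = (if Fc a b c d l y1 y2 y3 y4 then 1 else 0 :: int)" for y1 y2 y3 y4
  have O: "a i*a j + b i*b j + c i*c j + d i*d j = (if i=j then l else 0)"
    if "i \<in> {1..4}" "j \<in> {1..4}" for i j using orth that by blast
  define A4 where "A4 = (\<Sum>y1\<in>{0..<l}. \<Sum>y2\<in>{0..<l}. \<Sum>y3\<in>{0..<l}. \<Sum>y4\<in>{0..<l}. G y1 y2 y3 y4)"
  define A3 where "A3 = ((\<Sum>y1\<in>{0..<l}. \<Sum>y2\<in>{0..<l}. \<Sum>y3\<in>{0..<l}. G y1 y2 y3 0)
               + (\<Sum>y1\<in>{0..<l}. \<Sum>y2\<in>{0..<l}. \<Sum>y4\<in>{0..<l}. G y1 y2 0 y4)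
               + (\<Sum>y1\<in>{0..<l}. \<Sum>y3\<in>{0..<l}. \<Sum>y4\<in>{0..<l}. G y1 0 y3 y4)
               + (\<Sum>y2\<in>{0..<l}. \<Sum>y3\<in>{0..<l}. \<Sum>y4\<in>{0..<l}. G 0 y2 y3 y4))"
  define A2 where "A2 = ((\<Sum>y1\<in>{0..<l}. \<Sum>y2\<in>{0..<l}. G y1 y2 0 0)
               + (\<Sum>y1\<in>{0..<l}. \<Sum>y3\<in>{0..<l}. G y1 0 y3 0)
               + (\<Sum>y1\<in>{0..<l}. \<Sum>y4\<in>{0..<l}. G y1 0 0 y4)
               + (\<Sum>y2\<in>{0..<l}. \<Sum>y3\<in>{0..<l}. G 0 y2 y3 0)
               + (\<Sum>y2\<in>{0..<l}. \<Sum>y4\<in>{0..<l}. G 0 y2 0 y4)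
               + (\<Sum>y3\<in>{0..<l}. \<Sum>y4\<in>{0..<l}. G 0 0 y3 y4))"
  define A1 where "A1 = ((\<Sum>y1\<in>{0..<l}. G y1 0 0 0) + (\<Sum>y2\<in>{0..<l}. G 0 y2 0 0)
               + (\<Sum>y3\<in>{0..<l}. G 0 0 y3 0) + (\<Sum>y4\<in>{0..<l}. G 0 0 0 y4))"
  define A0 where "A0 = G 0 0 0 0"
  have cnt: "int (lattice_count a b c d t) = int t^4 * A4 + int t^3 * A3 + int t^2 * A2 + int t * A1 + A0"
    if t: "t > 0" for t
  proof -
    define I where "I = {0..int t * l}"
    have fI: "finite I" unfolding I_def by simp
    have "lattice_count a b c d t = card {(y1,y2,y3,y4). y1 \<in> I \<and> y2 \<in> I
             \<and> y3 \<in> I \<and> y4 \<in> I \<and> Fc a b c d l y1 y2 y3 y4}"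
      unfolding I_def by (rule lc_eq[OF l_pos orth t])
    also have "{(y1,y2,y3,y4). y1 \<in> I \<and> y2 \<in> I \<and> y3 \<in> I \<and> y4 \<in> I \<and> Fc a b c d l y1 y2 y3 y4}
        = {p \<in> I \<times> I \<times> I \<times> I. (case p of (y1,y2,y3,y4) \<Rightarrow> Fc a b c d l y1 y2 y3 y4)}" by auto
    finally have "int (lattice_count a b c d t) = int (card {p \<in> I \<times> I \<times> I \<times> I. (case p of (y1,y2,y3,y4) \<Rightarrow> Fc a b c d l y1 y2 y3 y4)})"
      by simp
    also have "\<dots> = (\<Sum>p\<in>I \<times> I \<times> I \<times> I. (case p of (y1,y2,y3,y4) \<Rightarrow> G y1 y2 y3 y4))"
      using fI by (simp add: sum.inter_filter[symmetric] G_def split_def if_distrib)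
    also have "\<dots> = (\<Sum>y1\<in>I. \<Sum>y2\<in>I. \<Sum>y3\<in>I. \<Sum>y4\<in>I. G y1 y2 y3 y4)"
      by (simp add: sum.cartesian_product split_def)
    also have "\<dots> = int t^4 * A4 + int t^3 * A3 + int t^2 * A2 + int t * A1 + A0"
      unfolding I_def A4_def A3_def A2_def A1_def A0_def
      by (rule expand4[OF l_pos]) (simp_all add: G_def Fc_per)
    finally show ?thesis .
  qed
  have n: "a i*a i + b i*b i + c i*c i + d i*d i = l" if "i \<in> {1..4}" for i using O[OF that that] by simp
  have o: "a i*a j + b i*b j + c i*c j + d i*d j = 0" if "i \<in> {1..4}" "j \<in> {1..4}" "i \<noteq> j" for i j
    using O[OF that(1,2)] that(3) by simp
  have n1: "a 1*a 1 + b 1*b 1 + c 1*c 1 + d 1*d 1 = l" using n[of 1] by simp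
  have n2: "a 2*a 2 + b 2*b 2 + c 2*c 2 + d 2*d 2 = l" using n[of 2] by simp
  have n3: "a 3*a 3 + b 3*b 3 + c 3*c 3 + d 3*d 3 = l" using n[of 3] by simp
  have n4: "a 4*a 4 + b 4*b 4 + c 4*c 4 + d 4*d 4 = l" using n[of 4] by simp
  have o12: "a 1*a 2 + b 1*b 2 + c 1*c 2 + d 1*d 2 = 0" using o[of 1 2] by simp
  have o13: "a 1*a 3 + b 1*b 3 + c 1*c 3 + d 1*d 3 = 0" using o[of 1 3] by simp
  have o14: "a 1*a 4 + b 1*b 4 + c 1*c 4 + d 1*d 4 = 0" using o[of 1 4] by simp
  have o23: "a 2*a 3 + b 2*b 3 + c 2*c 3 + d 2*d 3 = 0" using o[of 2 3] by simp
  have o24: "a 2*a 4 + b 2*b 4 + c 2*c 4 + d 2*d 4 = 0" using o[of 2 4] by simp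
  have o34: "a 3*a 4 + b 3*b 4 + c 3*c 4 + d 3*d 4 = 0" using o[of 3 4] by simp
  have Gs1: "G u 0 0 0 = (if l dvd u*a 1 \<and> l dvd u*b 1 \<and> l dvd u*c 1 \<and> l dvd u*d 1 then 1 else 0)" for u
    by (simp add: G_def Fc_def)
  have Gs2: "G 0 u 0 0 = (if l dvd u*a 2 \<and> l dvd u*b 2 \<and> l dvd u*c 2 \<and> l dvd u*d 2 then 1 else 0)" for u
    by (simp add: G_def Fc_def)
  have Gs3: "G 0 0 u 0 = (if l dvd u*a 3 \<and> l dvd u*b 3 \<and> l dvd u*c 3 \<and> l dvd u*d 3 then 1 else 0)" for u
    by (simp add: G_def Fc_def)
  have Gs4: "G 0 0 0 u = (if l dvd u*a 4 \<and> l dvd u*b 4 \<and> l dvd u*c 4 \<and> l dvd u*d 4 then 1 else 0)" for u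
    by (simp add: G_def Fc_def)
  have Gp12: "G u w 0 0 = (if l dvd u*a 1 + w*a 2 \<and> l dvd u*b 1 + w*b 2 \<and> l dvd u*c 1 + w*c 2 \<and> l dvd u*d 1 + w*d 2 then 1 else 0)" for u w
    by (simp add: G_def Fc_def)
  have Gp13: "G u 0 w 0 = (if l dvd u*a 1 + w*a 3 \<and> l dvd u*b 1 + w*b 3 \<and> l dvd u*c 1 + w*c 3 \<and> l dvd u*d 1 + w*d 3 then 1 else 0)" for u w
    by (simp add: G_def Fc_def)
  have Gp14: "G u 0 0 w = (if l dvd u*a 1 + w*a 4 \<and> l dvd u*b 1 + w*b 4 \<and> l dvd u*c 1 + w*c 4 \<and> l dvd u*d 1 + w*d 4 then 1 else 0)" for u w
    by (simp add: G_def Fc_def)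
  have Gp23: "G 0 u w 0 = (if l dvd u*a 2 + w*a 3 \<and> l dvd u*b 2 + w*b 3 \<and> l dvd u*c 2 + w*c 3 \<and> l dvd u*d 2 + w*d 3 then 1 else 0)" for u w
    by (simp add: G_def Fc_def)
  have Gp24: "G 0 u 0 w = (if l dvd u*a 2 + w*a 4 \<and> l dvd u*b 2 + w*b 4 \<and> l dvd u*c 2 + w*c 4 \<and> l dvd u*d 2 + w*d 4 then 1 else 0)" for u w
    by (simp add: G_def Fc_def)
  have Gp34: "G 0 0 u w = (if l dvd u*a 3 + w*a 4 \<and> l dvd u*b 3 + w*b 4 \<and> l dvd u*c 3 + w*c 4 \<and> l dvd u*d 3 + w*d 4 then 1 else 0)" for u w
    by (simp add: G_def Fc_def)
  have s1: "(\<Sum>y1\<in>{0..<l}. G y1 0 0 0) = Gcd {a 1, b 1, c 1, d 1}"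
    by (simp only: Gs1 single_count[OF l_pos n1])
  have s2: "(\<Sum>y1\<in>{0..<l}. G 0 y1 0 0) = Gcd {a 2, b 2, c 2, d 2}"
    by (simp only: Gs2 single_count[OF l_pos n2])
  have s3: "(\<Sum>y1\<in>{0..<l}. G 0 0 y1 0) = Gcd {a 3, b 3, c 3, d 3}"
    by (simp only: Gs3 single_count[OF l_pos n3])
  have s4: "(\<Sum>y1\<in>{0..<l}. G 0 0 0 y1) = Gcd {a 4, b 4, c 4, d 4}"
    by (simp only: Gs4 single_count[OF l_pos n4])
  have p12: "(\<Sum>y1\<in>{0..<l}. \<Sum>y2\<in>{0..<l}. G y1 y2 0 0) = zeta a b c d 1 2"
    unfolding zeta_def by (simp only: Gp12 pair_count[OF l_pos n1 n2 o12])
  have p13: "(\<Sum>y1\<in>{0..<l}. \<Sum>y2\<in>{0..<l}. G y1 0 y2 0) = zeta a b c d 1 3"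
    unfolding zeta_def by (simp only: Gp13 pair_count[OF l_pos n1 n3 o13])
  have p14: "(\<Sum>y1\<in>{0..<l}. \<Sum>y2\<in>{0..<l}. G y1 0 0 y2) = zeta a b c d 1 4"
    unfolding zeta_def by (simp only: Gp14 pair_count[OF l_pos n1 n4 o14])
  have p23: "(\<Sum>y1\<in>{0..<l}. \<Sum>y2\<in>{0..<l}. G 0 y1 y2 0) = zeta a b c d 2 3"
    unfolding zeta_def by (simp only: Gp23 pair_count[OF l_pos n2 n3 o23])
  have p24: "(\<Sum>y1\<in>{0..<l}. \<Sum>y2\<in>{0..<l}. G 0 y1 0 y2) = zeta a b c d 2 4"
    unfolding zeta_def by (simp only: Gp24 pair_count[OF l_pos n2 n4 o24])
  have p34: "(\<Sum>y1\<in>{0..<l}. \<Sum>y2\<in>{0..<l}. G 0 0 y1 y2) = zeta a b c d 3 4"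
    unfolding zeta_def by (simp only: Gp34 pair_count[OF l_pos n3 n4 o34])
  have A1v: "A1 = (\<Sum>i=1..4. Gcd {a i, b i, c i, d i})"
    unfolding A1_def sum4 using s1 s2 s3 s4 by simp
  have A2v: "A2 = (\<Sum>i=1..4. \<Sum>j=i+1..4. zeta a b c d i j)"
    unfolding A2_def sum_pairs using p12 p13 p14 p23 p24 p34 by simp
  have "(real_of_int (l^2) - A4) * real t^4 + (\<alpha>1 - A3) * real t^3 + (\<alpha>2 - A2) * real t^2
        + (\<alpha>3 - A1) * real t + (1 - A0) = 0" if "t \<in> {1,2,3,4,5}" for t :: nat
  proof -
    have tp: "t > 0" using that by auto
    have "real (lattice_count a b c d t) = real_of_int (int (lattice_count a b c d t))" by simp
    also have "\<dots> = real_of_int (int t^4 * A4 + int t^3 * A3 + int t^2 * A2 + int t * A1 + A0)"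
      using cnt[OF tp] by simp
    finally have e1: "real (lattice_count a b c d t) = real t^4 * A4 + real t^3 * A3 + real t^2 * A2 + real t * A1 + A0"
      by simp
    have e2: "real (lattice_count a b c d t) = real_of_int (l^2) * real t ^ 4 + \<alpha>1 * real t ^ 3 + \<alpha>2 * real t ^ 2 + \<alpha>3 * real t + 1"
      using ehrhart tp by blast
    show ?thesis using e1 e2 by (simp add: algebra_simps)
  qed
  from poly5[OF this] have "\<alpha>3 - A1 = 0" "\<alpha>2 - A2 = 0" by blast+
  then show ?thesis using A1v A2v by simp
qed



end
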